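(* Fix $a\in(0,1)$. For $b\in(0,\sqrt{\tfrac2a-2a})$ set $H=\frac12b^2-\frac1a-a$ and $c=1-ab^2$ (the energy and constant $c$ of the planar Stark solution with $(x(0),y(0))=(a,0)$, $(\dot x(0),\dot y(0))=(0,b)$), and define $$T_\xi=4\int_0^{\xi_1}\frac{d\xi}{\sqrt{\xi^4+2H\xi^2+2(c+1)}},\quad \xi_1^2=-H-\sqrt{H^2-2(c+1)},$$ $$T_\eta=4\int_0^{\eta_1}\frac{d\eta}{\sqrt{-\eta^4+2H\eta^2-2(c-1)}},\quad \eta_1^2=H+\sqrt{H^2-2(c-1)}.$$ Then $T_\xi/T_\eta$ is a strictly increasing function of $b$ and $$\lim_{b\to0}\frac{T_\xi}{T_\eta}=\frac{\sqrt{1+a^2}\,K(a^2)}{K(0)},\qquad \lim_{b\to\sqrt{\frac2a-2a}}\frac{T_\xi}{T_\eta}=+\infty .$$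
   Context: $K(m)=\int_0^1\frac{dt}{\sqrt{(1-t^2)(1-mt^2)}}$ is the complete elliptic integral of the first kind. $T_\xi$ and $T_\eta$ are the periods, in the regularized time $\tau$ (with $dt=(\xi^2+\eta^2)d\tau$), of the parabolic coordinates $\xi^2=r+x$, $\eta^2=r-x$ of that solution. *)

theory Defs
  imports "HOL-Analysis.Analysis"
begin

text \<open>Complete elliptic integral of the first kind (parameter convention m = k^2),
  as an (improper) Henstock-Kurzweil integral over [0,1].\<close>
definition ellK :: "real \<Rightarrow> real" where
  "ellK m = integral {0..1} (\<lambda>t. 1 / sqrt ((1 - t\<^sup>2) * (1 - m * t\<^sup>2)))"

definition starkH :: "real \<Rightarrow> real \<Rightarrow> real" where
  "starkH a b = b\<^sup>2 / 2 - 1 / a - a"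

definition starkc :: "real \<Rightarrow> real \<Rightarrow> real" where
  "starkc a b = 1 - a * b\<^sup>2"

definition xi1 :: "real \<Rightarrow> real \<Rightarrow> real" where
  "xi1 a b = sqrt (- starkH a b - sqrt ((starkH a b)\<^sup>2 - 2 * (starkc a b + 1)))"

definition eta1 :: "real \<Rightarrow> real \<Rightarrow> real" where
  "eta1 a b = sqrt (starkH a b + sqrt ((starkH a b)\<^sup>2 - 2 * (starkc a b - 1)))"

definition Txi :: "real \<Rightarrow> real \<Rightarrow> real" where
  "Txi a b = 4 * integral {0..xi1 a b}
     (\<lambda>x. 1 / sqrt (x^4 + 2 * starkH a b * x\<^sup>2 + 2 * (starkc a b + 1)))"

definition Teta :: "real \<Rightarrow> real \<Rightarrow> real" where
  "Teta a b = 4 * integral {0..eta1 a b}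
     (\<lambda>y. 1 / sqrt (- (y^4) + 2 * starkH a b * y\<^sup>2 - 2 * (starkc a b - 1)))"

end

theory Submission
  imports Defs
begin


definition Qf :: "real \<Rightarrow> real \<Rightarrow> real \<Rightarrow> real" where
  "Qf A B s = 1 / sqrt ((1 - s\<^sup>2) * (A + B * s\<^sup>2))"

definition II :: "real \<Rightarrow> real \<Rightarrow> real" where
  "II A B = integral {0..1} (Qf A B)"

lemma w_has_int: "((\<lambda>s. 1 / sqrt (1 - s\<^sup>2)) has_integral (pi/2)) {0..1}"
proof -
  have "((\<lambda>s. inverse (sqrt (1 - s\<^sup>2))) has_integral (arcsin 1 - arcsin 0)) {0..1}"
  proof (rule fundamental_theorem_of_calculus_interior)
    show "continuous_on {0..1} arcsin"
      by (rule continuous_on_subset[OF continuous_on_arcsin']) auto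
    fix x :: real assume "x \<in> {0<..<1}"
    then have "-1 < x" "x < 1" by auto
    from DERIV_arcsin[OF this] show "(arcsin has_vector_derivative inverse (sqrt (1 - x\<^sup>2))) (at x)"
      by (simp add: has_real_derivative_iff_has_vector_derivative)
  qed simp
  then show ?thesis by (simp add: inverse_eq_divide)
qed

lemma w_int_Ioo: "(\<lambda>s. 1 / sqrt (1 - s\<^sup>2)) integrable_on {0<..<1}"
  using w_has_int integrable_on_Icc_iff_Ioo by blast

lemma Qf_integrable:
  assumes A: "0 < A" and AB: "0 < A + B"
  shows "Qf A B integrable_on {0..1}"
proof -
  define m where "m = min A (A + B)"
  have m: "0 < m" using A AB by (simp add: m_def)
  have pos: "A + B * s\<^sup>2 \<ge> m" if "0 \<le> s\<^sup>2" "s\<^sup>2 \<le> 1" for s :: real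
  proof -
    have "A + B * s\<^sup>2 = (1 - s\<^sup>2) * A + s\<^sup>2 * (A + B)" by algebra
    also have "\<dots> \<ge> (1 - s\<^sup>2) * m + s\<^sup>2 * m"
      using that by (intro add_mono mult_left_mono) (auto simp: m_def)
    finally show ?thesis by (simp add: algebra_simps)
  qed
  have "Qf A B integrable_on {0<..<1}"
  proof (rule measurable_bounded_by_integrable_imp_integrable)
    show "Qf A B \<in> borel_measurable (lebesgue_on {0<..<1})"
    proof (rule continuous_imp_measurable_on_sets_lebesgue)
      show "continuous_on {0<..<1} (Qf A B)"
        unfolding Qf_def
      proof (intro continuous_intros ballI)
        fix x :: real assume x: "x \<in> {0<..<1}"
        then have "x\<^sup>2 < 1" "0 \<le> x\<^sup>2" "x\<^sup>2 \<le> 1" by (auto simp: abs_square_less_1 abs_square_le_1)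
        then have "0 < (1 - x\<^sup>2) * (A + B * x\<^sup>2)" using pos[of x] m by auto
        then show "sqrt ((1 - x\<^sup>2) * (A + B * x\<^sup>2)) \<noteq> 0" by (metis less_irrefl mult_zero_left mult_zero_right real_sqrt_eq_zero_cancel_iff)
      qed
    qed auto
    show "(\<lambda>s. (1 / sqrt m) * (1 / sqrt (1 - s\<^sup>2))) integrable_on {0<..<1}"
      using w_int_Ioo using integrable_on_cmult_left[OF w_int_Ioo, of "1 / sqrt m"] by simp
    fix x :: real assume x: "x \<in> {0<..<1}"
    then have "x\<^sup>2 < 1" "0 \<le> x\<^sup>2" "x\<^sup>2 \<le> 1" by (auto simp: abs_square_less_1 abs_square_le_1)
    then have p: "A + B * x\<^sup>2 \<ge> m" "0 < 1 - x\<^sup>2" using pos[of x] by auto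
    have "norm (Qf A B x) = 1 / (sqrt (1 - x\<^sup>2) * sqrt (A + B * x\<^sup>2))"
      unfolding Qf_def using p m by (simp add: real_sqrt_mult)
    also have "\<dots> \<le> 1 / (sqrt (1 - x\<^sup>2) * sqrt m)"
      using p m by (intro divide_left_mono mult_left_mono mult_pos_pos) auto
    finally show "norm (Qf A B x) \<le> (1 / sqrt m) * (1 / sqrt (1 - x\<^sup>2))" by (simp add: mult.commute)
  qed auto
  then show ?thesis using integrable_on_Icc_iff_Ioo by blast
qed

lemma Qf_pointwise:
  assumes s: "0 \<le> s" "s \<le> 1" and X: "0 < A + B * s\<^sup>2" and Y: "0 < C + D * s\<^sup>2"
    and r: "0 < r" and le: "C + D * s\<^sup>2 \<le> r * (A + B * s\<^sup>2)"
  shows "Qf A B s \<le> sqrt r * Qf C D s"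
proof -
  define y where "y = 1 - s\<^sup>2"
  have y: "0 \<le> y" using s by (simp add: y_def abs_square_le_1)
  show ?thesis
  proof (cases "y = 0")
    case True then show ?thesis by (simp add: Qf_def y_def[symmetric])
  next
    case False
    with y have y: "0 < y" by simp
    have "Qf A B s = sqrt r / sqrt (r * (y * (A + B * s\<^sup>2)))"
      unfolding Qf_def y_def[symmetric] using r by (simp add: real_sqrt_mult)
    also have "\<dots> \<le> sqrt r / sqrt (y * (C + D * s\<^sup>2))"
    proof (rule divide_left_mono)
      have "y * (C + D * s\<^sup>2) \<le> y * (r * (A + B * s\<^sup>2))" using le y by (simp add: mult_left_mono)
      then show "sqrt (y * (C + D * s\<^sup>2)) \<le> sqrt (r * (y * (A + B * s\<^sup>2)))"
        by (simp add: algebra_simps)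
      show "0 < sqrt (r * (y * (A + B * s\<^sup>2))) * sqrt (y * (C + D * s\<^sup>2))"
        using r y X Y by simp
    qed (use r in simp)
    also have "\<dots> = sqrt r * Qf C D s" by (simp add: Qf_def y_def)
    finally show ?thesis .
  qed
qed

lemma lin_pos:
  fixes x A B :: real
  assumes "0 \<le> x" "x \<le> 1" "0 < A" "0 < A + B"
  shows "0 < A + B * x"
proof -
  have "A + B * x = (1 - x) * A + x * (A + B)" by algebra
  moreover have "0 < (1 - x) * A + x * (A + B)"
  proof (cases "x = 1")
    case True then show ?thesis using assms by simp
  next
    case False then have "0 < 1 - x" using assms by simp
    then show ?thesis using assms by (intro add_pos_nonneg) auto
  qed
  ultimately show ?thesis by simp
qed

lemma lin_le:
  fixes x A B C D r :: real
  assumes "0 \<le> x" "x \<le> 1" "C \<le> r * A" "C + D \<le> r * (A + B)"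
  shows "C + D * x \<le> r * (A + B * x)"
proof -
  have "C + D * x = (1 - x) * C + x * (C + D)" by algebra
  also have "\<dots> \<le> (1 - x) * (r * A) + x * (r * (A + B))"
    using assms by (intro add_mono mult_left_mono) auto
  also have "\<dots> = r * (A + B * x)" by algebra
  finally show ?thesis .
qed

lemma II_cmp:
  assumes A: "0 < A" "0 < A + B" and C: "0 < C" "0 < C + D" and r: "0 < r"
    and le1: "C \<le> r * A" and le2: "C + D \<le> r * (A + B)"
  shows "II A B \<le> sqrt r * II C D"
proof -
  have "II A B \<le> integral {0..1} (\<lambda>s. sqrt r * Qf C D s)"
    unfolding II_def
  proof (rule integral_le)
    show "Qf A B integrable_on {0..1}" using Qf_integrable A by blast
    show "(\<lambda>s. sqrt r * Qf C D s) integrable_on {0..1}"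
      using integrable_on_cmult_left[OF Qf_integrable[OF C], of "sqrt r"] by simp
    fix s :: real assume s: "s \<in> {0..1}"
    then have s2: "0 \<le> s\<^sup>2" "s\<^sup>2 \<le> 1" by (auto simp: abs_square_le_1)
    show "Qf A B s \<le> sqrt r * Qf C D s"
      using s s2 lin_pos[OF s2 A] lin_pos[OF s2 C] lin_le[OF s2 le1 le2] r
      by (intro Qf_pointwise) auto
  qed
  then show ?thesis by (simp add: II_def)
qed

lemma II_lower:
  assumes A: "0 < A" "0 < A + B"
  shows "1 / sqrt (A + \<bar>B\<bar>) \<le> II A B"
proof -
  have "((\<lambda>_::real. 1 / sqrt (A + \<bar>B\<bar>)) has_integral 1 / sqrt (A + \<bar>B\<bar>)) {0..1}"
    using has_integral_const_real[of "1 / sqrt (A + \<bar>B\<bar>)" 0 1] by simp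
  then have "((\<lambda>_::real. 1 / sqrt (A + \<bar>B\<bar>)) has_integral 1 / sqrt (A + \<bar>B\<bar>)) {0<..<1}"
    by (rule has_integral_Icc_iff_Ioo[THEN iffD1])
  moreover have "(Qf A B has_integral II A B) {0<..<1}"
    using Qf_integrable[OF A] has_integral_Icc_iff_Ioo unfolding II_def by blast
  ultimately show ?thesis
  proof (rule has_integral_le)
    fix s :: real assume s: "s \<in> {0<..<1}"
    then have s2: "0 \<le> s\<^sup>2" "s\<^sup>2 < 1" by (auto simp: abs_square_less_1)
    have p: "0 < A + B * s\<^sup>2" using lin_pos[of "s\<^sup>2" A B] s2 A by simp
    have "B * s\<^sup>2 \<le> \<bar>B\<bar>"
    proof -
      have "B * s\<^sup>2 \<le> \<bar>B\<bar> * s\<^sup>2" by (simp add: mult_right_mono)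
      also have "\<dots> \<le> \<bar>B\<bar>" using s2 by (simp add: mult_left_le)
      finally show ?thesis .
    qed
    then have "(1 - s\<^sup>2) * (A + B * s\<^sup>2) \<le> A + \<bar>B\<bar>"
    proof -
      have "(1 - s\<^sup>2) * (A + B * s\<^sup>2) \<le> 1 * (A + B * s\<^sup>2)"
        using s2 p by (intro mult_right_mono) auto
      then show ?thesis using \<open>B * s\<^sup>2 \<le> \<bar>B\<bar>\<close> by simp
    qed
    moreover have "0 < (1 - s\<^sup>2) * (A + B * s\<^sup>2)" using s2 p by simp
    ultimately show "1 / sqrt (A + \<bar>B\<bar>) \<le> Qf A B s"
      unfolding Qf_def by (intro divide_left_mono) auto
  qed
qed

lemma II_pos: "0 < A \<Longrightarrow> 0 < A + B \<Longrightarrow> 0 < II A B"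
  using II_lower[of A B] by (smt (verit) divide_pos_pos real_sqrt_gt_zero)

lemma max_ratio:
  fixes A B C D :: real
  assumes "0 < A" "0 < A + B"
  shows "C \<le> max (C / A) ((C + D) / (A + B)) * A"
    and "C + D \<le> max (C / A) ((C + D) / (A + B)) * (A + B)"
proof -
  have "C / A \<le> max (C / A) ((C + D) / (A + B))" by simp
  then show "C \<le> max (C / A) ((C + D) / (A + B)) * A" using pos_divide_le_eq[OF assms(1)] by blast
  have "(C + D) / (A + B) \<le> max (C / A) ((C + D) / (A + B))" by simp
  then show "C + D \<le> max (C / A) ((C + D) / (A + B)) * (A + B)" using pos_divide_le_eq[OF assms(2)] by blast
qed

lemma II_tendsto:
  assumes tA: "(A \<longlongrightarrow> A0) F" and tB: "(B \<longlongrightarrow> B0) F" and A0: "0 < A0" "0 < A0 + B0"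
  shows "((\<lambda>x. II (A x) (B x)) \<longlongrightarrow> II A0 B0) F"
proof -
  have tAB: "((\<lambda>x. A x + B x) \<longlongrightarrow> A0 + B0) F" using tA tB by (rule tendsto_add)
  have ev: "eventually (\<lambda>x. 0 < A x \<and> 0 < A x + B x) F"
    using order_tendstoD(1)[OF tA A0(1)] order_tendstoD(1)[OF tAB A0(2)] by eventually_elim auto
  define r1 where "r1 x = max (A0 / A x) ((A0 + B0) / (A x + B x))" for x
  define r2 where "r2 x = max (A x / A0) ((A x + B x) / (A0 + B0))" for x
  have t1: "(r1 \<longlongrightarrow> 1) F"
  proof -
    have "(r1 \<longlongrightarrow> max (A0 / A0) ((A0 + B0) / (A0 + B0))) F"
      unfolding r1_def using A0 by (intro tendsto_intros tA tAB) auto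
    then show ?thesis using A0 by simp
  qed
  have t2: "(r2 \<longlongrightarrow> 1) F"
  proof -
    have "(r2 \<longlongrightarrow> max (A0 / A0) ((A0 + B0) / (A0 + B0))) F"
      unfolding r2_def using A0 by (intro tendsto_intros tA tAB) auto
    then show ?thesis using A0 by simp
  qed
  show ?thesis
  proof (rule tendsto_sandwich[of "\<lambda>x. II A0 B0 / sqrt (r2 x)" _ _ "\<lambda>x. sqrt (r1 x) * II A0 B0"])
    show "eventually (\<lambda>x. II A0 B0 / sqrt (r2 x) \<le> II (A x) (B x)) F"
      using ev
    proof eventually_elim
      case (elim x)
      have r: "0 < r2 x" unfolding r2_def using elim A0 by (simp add: less_max_iff_disj)
      have "II A0 B0 \<le> sqrt (r2 x) * II (A x) (B x)"
        using elim A0 r max_ratio[OF A0, of "A x" "B x"] by (intro II_cmp) (auto simp: r2_def mult.commute)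
      then show ?case using r by (simp add: divide_le_eq mult.commute)
    qed
    show "eventually (\<lambda>x. II (A x) (B x) \<le> sqrt (r1 x) * II A0 B0) F"
      using ev
    proof eventually_elim
      case (elim x)
      have r: "0 < r1 x" unfolding r1_def using elim A0 by (simp add: less_max_iff_disj)
      show ?case
        using elim A0 r max_ratio[of "A x" "B x" A0 B0] by (intro II_cmp) (auto simp: r1_def mult.commute)
    qed
    have "((\<lambda>x. II A0 B0 / sqrt (r2 x)) \<longlongrightarrow> II A0 B0 / sqrt 1) F"
      by (intro tendsto_intros t2) simp
    then show "((\<lambda>x. II A0 B0 / sqrt (r2 x)) \<longlongrightarrow> II A0 B0) F" by simp
    have "((\<lambda>x. sqrt (r1 x) * II A0 B0) \<longlongrightarrow> sqrt 1 * II A0 B0) F"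
      by (intro tendsto_intros t1)
    then show "((\<lambda>x. sqrt (r1 x) * II A0 B0) \<longlongrightarrow> II A0 B0) F" by simp
  qed
qed

lemma scale_integral:
  assumes L: "0 < L" and g: "g integrable_on {0..1}"
    and f: "\<And>x. x \<in> {0..L} \<Longrightarrow> f x = g (x / L) / L"
  shows "integral {0..L} f = integral {0..1} (g :: real \<Rightarrow> real)"
proof -
  have "(g has_integral integral {0..1} g) (cbox 0 1)" using g by (simp add: integrable_integral)
  from has_integral_affinity'[OF this, of "1/L" 0] L
  have "((\<lambda>x. g (x / L)) has_integral (integral {0..1} g * L)) {0..L}"
    by (simp add: divide_inverse mult.commute)
  from has_integral_mult_left[OF this, of "1/L"] L
  have "((\<lambda>x. g (x / L) / L) has_integral integral {0..1} g) {0..L}" by simp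
  then have "(f has_integral integral {0..1} g) {0..L}"
    using f by (subst has_integral_cong) auto
  then show ?thesis by (rule integral_unique)
qed

lemma sqrt_scale:
  fixes L P R :: real
  assumes "0 < L" "P = L\<^sup>2 * R"
  shows "1 / sqrt P = 1 / sqrt R / L"
  using assms by (simp add: real_sqrt_mult)

definition bet :: "real \<Rightarrow> real \<Rightarrow> real" where "bet a b = 2 / a - b\<^sup>2"
definition pp :: "real \<Rightarrow> real \<Rightarrow> real" where "pp a b = bet a b / 2 + a"
definition qq :: "real \<Rightarrow> real \<Rightarrow> real" where "qq a b = sqrt ((bet a b / 2 - a)\<^sup>2 + 4)"

lemma Txi_eq:
  assumes a: "0 < a" and b: "b\<^sup>2 < 2 / a - 2 * a"
  shows "Txi a b = 4 * II (bet a b) (- 2 * a)"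
proof -
  define \<beta> where "\<beta> = bet a b"
  have \<beta>: "2 * a < \<beta>" using b by (simp add: \<beta>_def bet_def)
  have H: "starkH a b = - (\<beta> / 2 + a)" by (simp add: starkH_def \<beta>_def bet_def field_simps)
  have c: "starkc a b = 1 - a * (2 / a - \<beta>)" by (simp add: starkc_def \<beta>_def bet_def)
  have disc: "(starkH a b)\<^sup>2 - 2 * (starkc a b + 1) = (\<beta> / 2 - a)\<^sup>2"
    using a unfolding H c by (simp add: field_simps power2_eq_square)
  have "sqrt ((starkH a b)\<^sup>2 - 2 * (starkc a b + 1)) = \<beta> / 2 - a"
    unfolding disc using \<beta> by simp
  then have xi: "xi1 a b = sqrt (2 * a)" unfolding xi1_def H by (simp add: algebra_simps)
  define L where "L = sqrt (2 * a)"
  have L: "0 < L" "L\<^sup>2 = 2 * a" using a by (auto simp: L_def)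
  have "integral {0..L} (\<lambda>x. 1 / sqrt (x^4 + 2 * starkH a b * x\<^sup>2 + 2 * (starkc a b + 1)))
        = integral {0..1} (Qf \<beta> (- 2 * a))"
  proof (rule scale_integral[OF L(1)])
    show "Qf \<beta> (- 2 * a) integrable_on {0..1}" using \<beta> a by (intro Qf_integrable) auto
    fix x :: real
    have "x^4 + 2 * starkH a b * x\<^sup>2 + 2 * (starkc a b + 1)
        = L\<^sup>2 * ((1 - (x / L)\<^sup>2) * (\<beta> + - 2 * a * (x / L)\<^sup>2))"
      using L a unfolding H c by (simp add: power_divide field_simps)
    then show "1 / sqrt (x^4 + 2 * starkH a b * x\<^sup>2 + 2 * (starkc a b + 1)) = Qf \<beta> (- 2 * a) (x / L) / L"
      unfolding Qf_def by (rule sqrt_scale[OF L(1)])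
  qed
  then show ?thesis unfolding Txi_def xi II_def \<beta>_def L_def by simp
qed

lemma qq_pp:
  assumes a: "0 < a"
  shows "(qq a b)\<^sup>2 - (pp a b)\<^sup>2 = 2 * a * b\<^sup>2"
proof -
  have "(qq a b)\<^sup>2 = (bet a b / 2 - a)\<^sup>2 + 4" by (simp add: qq_def)
  then show ?thesis using a by (simp add: pp_def bet_def power2_eq_square field_simps)
qed

lemma qq_gt:
  assumes a: "0 < a" and b: "0 < b"
  shows "\<bar>pp a b\<bar> < qq a b"
proof -
  have "0 < 2 * a * b\<^sup>2" using a b by simp
  then have "(pp a b)\<^sup>2 < (qq a b)\<^sup>2" using qq_pp[OF a, of b] by linarith
  moreover have "0 \<le> qq a b" by (simp add: qq_def)
  ultimately show ?thesis using power2_less_imp_less[of "\<bar>pp a b\<bar>" "qq a b"] by simp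
qed

lemma Teta_eq:
  assumes a: "0 < a" and b: "0 < b"
  shows "Teta a b = 4 * II (qq a b + pp a b) (qq a b - pp a b)"
proof -
  define p where "p = pp a b"
  define q where "q = qq a b"
  have pq: "\<bar>p\<bar> < q" using qq_gt[OF a b] by (simp add: p_def q_def)
  have qp2: "q\<^sup>2 - p\<^sup>2 = 2 * a * b\<^sup>2" using qq_pp[OF a] by (simp add: p_def q_def)
  have H: "starkH a b = - p" by (simp add: starkH_def p_def pp_def bet_def field_simps)
  have c: "starkc a b - 1 = - a * b\<^sup>2" by (simp add: starkc_def)
  have "(starkH a b)\<^sup>2 - 2 * (starkc a b - 1) = q\<^sup>2"
    unfolding H c using qp2 by simp
  then have "sqrt ((starkH a b)\<^sup>2 - 2 * (starkc a b - 1)) = q"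
    using pq by simp
  then have eta: "eta1 a b = sqrt (q - p)" unfolding eta1_def H by simp
  define L where "L = sqrt (q - p)"
  have L: "0 < L" "L\<^sup>2 = q - p" using pq by (auto simp: L_def)
  have "integral {0..L} (\<lambda>y. 1 / sqrt (- (y^4) + 2 * starkH a b * y\<^sup>2 - 2 * (starkc a b - 1)))
        = integral {0..1} (Qf (q + p) (q - p))"
  proof (rule scale_integral[OF L(1)])
    show "Qf (q + p) (q - p) integrable_on {0..1}" using pq by (intro Qf_integrable) auto
    fix y :: real
    have "- (y^4) + 2 * starkH a b * y\<^sup>2 - 2 * (starkc a b - 1)
        = L\<^sup>2 * ((1 - (y / L)\<^sup>2) * ((q + p) + (q - p) * (y / L)\<^sup>2))"
    proof -
      have "L\<^sup>2 * ((1 - (y / L)\<^sup>2) * ((q + p) + (q - p) * (y / L)\<^sup>2))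
          = (q - p - y\<^sup>2) * (q + p + y\<^sup>2)"
      proof -
        have e1: "(y / L)\<^sup>2 = y\<^sup>2 / L\<^sup>2" by (simp add: power_divide)
        have e2: "L\<^sup>2 * (1 - y\<^sup>2 / L\<^sup>2) = L\<^sup>2 - y\<^sup>2" using L(1) by (simp add: field_simps)
        have e3: "(q - p) * (y\<^sup>2 / L\<^sup>2) = y\<^sup>2" using L(1) unfolding L(2)[symmetric] by simp
        have "L\<^sup>2 * ((1 - (y / L)\<^sup>2) * ((q + p) + (q - p) * (y / L)\<^sup>2))
            = (L\<^sup>2 * (1 - y\<^sup>2 / L\<^sup>2)) * ((q + p) + (q - p) * (y\<^sup>2 / L\<^sup>2))"
          unfolding e1 by (simp only: mult.assoc)
        also have "\<dots> = (L\<^sup>2 - y\<^sup>2) * ((q + p) + y\<^sup>2)" by (simp only: e2 e3)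
        also have "\<dots> = (q - p - y\<^sup>2) * (q + p + y\<^sup>2)" by (simp only: L(2))
        finally show ?thesis .
      qed
      also have "\<dots> = q\<^sup>2 - p\<^sup>2 - 2 * p * y\<^sup>2 - y^4"
        by (simp add: power2_eq_square power4_eq_xxxx algebra_simps)
      finally show ?thesis unfolding H c qp2 by simp
    qed
    then show "1 / sqrt (- (y^4) + 2 * starkH a b * y\<^sup>2 - 2 * (starkc a b - 1)) = Qf (q + p) (q - p) (y / L) / L"
      unfolding Qf_def by (rule sqrt_scale[OF L(1)])
  qed
  then show ?thesis unfolding Teta_def eta II_def p_def q_def L_def by simp
qed



lemma sq_lt_of_lt_sqrt:
  fixes b y :: real
  assumes "0 \<le> b" "b < sqrt y" "0 < y"
  shows "b\<^sup>2 < y"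
proof -
  have "b\<^sup>2 < (sqrt y)\<^sup>2" using assms by (intro power_strict_mono) auto
  then show ?thesis using assms by simp
qed

lemma mono_step:
  assumes a: "0 < a" "a < 1" and b1: "0 < b1" and b12: "b1 < b2" and b2: "b2\<^sup>2 < 2 / a - 2 * a"
  shows "II (bet a b1) (- 2 * a) / II (qq a b1 + pp a b1) (qq a b1 - pp a b1)
       < II (bet a b2) (- 2 * a) / II (qq a b2 + pp a b2) (qq a b2 - pp a b2)"
proof -
  define \<beta>1 where "\<beta>1 = bet a b1"
  define \<beta>2 where "\<beta>2 = bet a b2"
  have b1sq: "b1\<^sup>2 < b2\<^sup>2" using b1 b12 by (intro power_strict_mono) auto
  have \<beta>: "2 * a < \<beta>2" "\<beta>2 < \<beta>1" "\<beta>1 < 2 / a"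
    using b2 b1sq b1 by (auto simp: \<beta>1_def \<beta>2_def bet_def)
  have b2pos: "0 < b2" using b1 b12 by simp
  define p1 where "p1 = pp a b1"
  define p2 where "p2 = pp a b2"
  define q1 where "q1 = qq a b1"
  define q2 where "q2 = qq a b2"
  have pq1: "\<bar>p1\<bar> < q1" using qq_gt[OF a(1) b1] by (simp add: p1_def q1_def)
  have pq2: "\<bar>p2\<bar> < q2" using qq_gt[OF a(1) b2pos] by (simp add: p2_def q2_def)
  have p1: "p1 = \<beta>1 / 2 + a" by (simp add: p1_def pp_def \<beta>1_def)
  have p2: "p2 = \<beta>2 / 2 + a" by (simp add: p2_def pp_def \<beta>2_def)
  have q1s: "q1\<^sup>2 = (\<beta>1 / 2 - a)\<^sup>2 + 4" by (simp add: q1_def qq_def \<beta>1_def)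
  have q2s: "q2\<^sup>2 = (\<beta>2 / 2 - a)\<^sup>2 + 4" by (simp add: q2_def qq_def \<beta>2_def)
  define X1 where "X1 = II \<beta>1 (- 2 * a)"
  define X2 where "X2 = II \<beta>2 (- 2 * a)"
  define Y1 where "Y1 = II (q1 + p1) (q1 - p1)"
  define Y2 where "Y2 = II (q2 + p2) (q2 - p2)"
  have X1pos: "0 < X1" unfolding X1_def using \<beta> a by (intro II_pos) auto
  have X2pos: "0 < X2" unfolding X2_def using \<beta> a by (intro II_pos) auto
  have Y1pos: "0 < Y1" unfolding Y1_def using pq1 by (intro II_pos) auto
  have Y2pos: "0 < Y2" unfolding Y2_def using pq2 by (intro II_pos) auto
  define r where "r = \<beta>2 / \<beta>1"
  have r: "0 < r" "r < 1" using \<beta> a by (auto simp: r_def)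
  have X12: "X1 \<le> sqrt r * X2"
    unfolding X1_def X2_def
  proof (rule II_cmp)
    show "\<beta>2 \<le> r * \<beta>1" using \<beta> a by (simp add: r_def)
    have "r * (\<beta>1 + - 2 * a) = \<beta>2 - 2 * a * r" using \<beta> a by (simp add: r_def field_simps)
    also have "\<dots> \<ge> \<beta>2 + - 2 * a" using r a by simp
    finally show "\<beta>2 + - 2 * a \<le> r * (\<beta>1 + - 2 * a)" .
  qed (use \<beta> a r in auto)
  have qb: "q1 * \<beta>2 < q2 * \<beta>1"
  proof -
    have br: "a * \<beta>1 * \<beta>2 < (a\<^sup>2 + 4) * (\<beta>1 + \<beta>2)"
    proof -
      have "a * \<beta>1 < 2" using \<beta> a by (simp add: less_divide_eq mult.commute)
      then have "a * \<beta>1 * \<beta>2 \<le> 2 * \<beta>2" using \<beta> a by (intro mult_right_mono) auto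
      also have "\<dots> < (a\<^sup>2 + 4) * (\<beta>1 + \<beta>2)"
      proof -
        have "2 * \<beta>2 < 4 * (\<beta>1 + \<beta>2)" using \<beta> a by simp
        also have "\<dots> \<le> (a\<^sup>2 + 4) * (\<beta>1 + \<beta>2)" using \<beta> a by (intro mult_right_mono) auto
        finally show ?thesis .
      qed
      finally show ?thesis .
    qed
    have "(q2 * \<beta>1)\<^sup>2 - (q1 * \<beta>2)\<^sup>2 = (\<beta>1 - \<beta>2) * ((a\<^sup>2 + 4) * (\<beta>1 + \<beta>2) - a * \<beta>1 * \<beta>2)"
    proof -
      have "(q2 * \<beta>1)\<^sup>2 - (q1 * \<beta>2)\<^sup>2 = ((\<beta>2 / 2 - a)\<^sup>2 + 4) * \<beta>1\<^sup>2 - ((\<beta>1 / 2 - a)\<^sup>2 + 4) * \<beta>2\<^sup>2"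
        by (simp only: power_mult_distrib q1s q2s)
      also have "\<dots> = (\<beta>1 - \<beta>2) * ((a\<^sup>2 + 4) * (\<beta>1 + \<beta>2) - a * \<beta>1 * \<beta>2)"
        by (simp add: power2_eq_square field_simps)
      finally show ?thesis .
    qed
    also have "\<dots> > 0" using br \<beta> by simp
    finally have "(q1 * \<beta>2)\<^sup>2 < (q2 * \<beta>1)\<^sup>2" by simp
    moreover have "0 \<le> q2 * \<beta>1" using pq2 \<beta> a by (intro mult_nonneg_nonneg) auto
    ultimately show ?thesis by (rule power2_less_imp_less)
  qed
  have Ab: "(q1 + p1) * \<beta>2 < (q2 + p2) * \<beta>1"
  proof -
    have "(q1 + p1) * \<beta>2 = q1 * \<beta>2 + \<beta>1 * \<beta>2 / 2 + a * \<beta>2" by (simp add: p1 algebra_simps)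
    also have "\<dots> < q2 * \<beta>1 + \<beta>1 * \<beta>2 / 2 + a * \<beta>1"
    proof -
      have "a * \<beta>2 < a * \<beta>1" using \<beta> a by simp
      then show ?thesis using qb by linarith
    qed
    also have "\<dots> = (q2 + p2) * \<beta>1" by (simp add: p2 algebra_simps)
    finally show ?thesis .
  qed
  define r' where "r' = max ((q1 + p1) / (q2 + p2)) ((q1 + p1 + (q1 - p1)) / (q2 + p2 + (q2 - p2)))"
  have A2pos: "0 < q2 + p2" using pq2 by auto
  have r'lt: "r' < \<beta>1 / \<beta>2"
  proof -
    have "(q1 + p1) / (q2 + p2) < \<beta>1 / \<beta>2" using Ab A2pos \<beta> a
      by (simp add: divide_less_eq less_divide_eq mult.commute)
    moreover have "(q1 + p1 + (q1 - p1)) / (q2 + p2 + (q2 - p2)) < \<beta>1 / \<beta>2"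
    proof -
      have "q1 / q2 < \<beta>1 / \<beta>2" using qb pq2 \<beta> a
        by (simp add: divide_less_eq less_divide_eq mult.commute)
      then show ?thesis by simp
    qed
    ultimately show ?thesis by (simp add: r'_def)
  qed
  have r'pos: "0 < r'" using pq1 A2pos by (simp add: r'_def less_max_iff_disj)
  have Y21: "Y2 \<le> sqrt r' * Y1"
    unfolding Y1_def Y2_def
    using max_ratio[of "q2 + p2" "q2 - p2" "q1 + p1" "q1 - p1"] pq1 pq2 r'pos
    by (intro II_cmp) (auto simp: r'_def mult.commute)
  have rr: "r * r' < 1"
  proof -
    have "r * r' < r * (\<beta>1 / \<beta>2)" using r r'lt by (intro mult_strict_left_mono) auto
    also have "\<dots> = 1" using \<beta> a by (simp add: r_def)
    finally show ?thesis .
  qed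
  have "X1 * Y2 \<le> (sqrt r * X2) * (sqrt r' * Y1)"
    using X12 Y21 X1pos Y2pos by (intro mult_mono) auto
  also have "\<dots> = sqrt (r * r') * (X2 * Y1)" by (simp add: real_sqrt_mult)
  also have "\<dots> < X2 * Y1"
  proof -
    have "sqrt (r * r') < 1" using rr by simp
    then show ?thesis using X2pos Y1pos by simp
  qed
  finally have "X1 * Y2 < X2 * Y1" .
  then have "X1 / Y1 < X2 / Y2" using Y1pos Y2pos by (simp add: divide_less_eq less_divide_eq mult.commute mult.left_commute)
  then show ?thesis by (simp add: X1_def X2_def Y1_def Y2_def \<beta>1_def \<beta>2_def p1_def p2_def q1_def q2_def)
qed



lemma ellK0_eq: "ellK 0 = II 1 0"
  unfolding ellK_def II_def Qf_def by simp

lemma ellK0_pos: "0 < ellK 0"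
  unfolding ellK0_eq by (rule II_pos) auto

lemma II_A0:
  assumes "0 < A"
  shows "II A 0 = ellK 0 / sqrt A"
proof -
  have "II A 0 = integral {0..1} (\<lambda>s. 1 / sqrt ((1 - s\<^sup>2) * (1 - 0 * s\<^sup>2)) / sqrt A)"
    unfolding II_def Qf_def using assms by (intro integral_cong) (simp add: real_sqrt_mult)
  then show ?thesis unfolding ellK_def by (simp only: integral_divide)
qed

lemma II_xi0:
  assumes a: "0 < a"
  shows "II (2 / a) (- 2 * a) = sqrt (a / 2) * ellK (a\<^sup>2)"
proof -
  have "II (2 / a) (- 2 * a) = integral {0..1} (\<lambda>t. sqrt (a / 2) * (1 / sqrt ((1 - t\<^sup>2) * (1 - a\<^sup>2 * t\<^sup>2))))"
    unfolding II_def Qf_def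
  proof (intro integral_cong)
    fix t :: real
    have "(1 - t\<^sup>2) * (2 / a + - 2 * a * t\<^sup>2) = (2 / a) * ((1 - t\<^sup>2) * (1 - a\<^sup>2 * t\<^sup>2))"
      using a by (simp add: field_simps power2_eq_square)
    then show "1 / sqrt ((1 - t\<^sup>2) * (2 / a + - 2 * a * t\<^sup>2)) = sqrt (a / 2) * (1 / sqrt ((1 - t\<^sup>2) * (1 - a\<^sup>2 * t\<^sup>2)))"
      using a by (simp add: real_sqrt_mult real_sqrt_divide)
  qed
  then show ?thesis unfolding ellK_def by (simp only: integral_mult_right)
qed

lemma vals0:
  assumes a: "0 < a"
  shows "bet a 0 = 2 / a" "pp a 0 = 1 / a + a" "qq a 0 = 1 / a + a"
proof -
  show "bet a 0 = 2 / a" by (simp add: bet_def)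
  then show "pp a 0 = 1 / a + a" by (simp add: pp_def)
  have "(2 / a / 2 - a)\<^sup>2 + 4 = (1 / a + a)\<^sup>2"
    using a by (simp add: field_simps power2_eq_square)
  then show "qq a 0 = 1 / a + a" using a \<open>bet a 0 = 2 / a\<close> by (simp add: qq_def)
qed

lemma final_value:
  assumes a: "0 < a"
  shows "II (bet a 0) (- 2 * a) / II (qq a 0 + pp a 0) (qq a 0 - pp a 0) = sqrt (1 + a\<^sup>2) * ellK (a\<^sup>2) / ellK 0"
proof -
  have A: "qq a 0 + pp a 0 = 2 / a + 2 * a" "qq a 0 - pp a 0 = 0" using vals0[OF a] by auto
  have pos: "0 < 2 / a + 2 * a" using a by (intro add_pos_pos) auto
  have "II (bet a 0) (- 2 * a) / II (qq a 0 + pp a 0) (qq a 0 - pp a 0)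
      = sqrt (a / 2) * ellK (a\<^sup>2) / (ellK 0 / sqrt (2 / a + 2 * a))"
    unfolding A vals0(1)[OF a] II_xi0[OF a] II_A0[OF pos] ..
  also have "\<dots> = (sqrt (a / 2) * sqrt (2 / a + 2 * a)) * ellK (a\<^sup>2) / ellK 0"
    using ellK0_pos pos by (simp add: field_simps)
  also have "sqrt (a / 2) * sqrt (2 / a + 2 * a) = sqrt (1 + a\<^sup>2)"
    using a by (simp add: real_sqrt_mult[symmetric] field_simps power2_eq_square)
  finally show ?thesis .
qed

lemma ratio_eq:
  assumes a: "0 < a" and b: "0 < b" "b\<^sup>2 < 2 / a - 2 * a"
  shows "Txi a b / Teta a b = II (bet a b) (- 2 * a) / II (qq a b + pp a b) (qq a b - pp a b)"
  unfolding Txi_eq[OF a b(2)] Teta_eq[OF a b(1)] by simp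

lemma lim0:
  assumes a: "0 < a" "a < 1"
  shows "((\<lambda>b. Txi a b / Teta a b) \<longlongrightarrow> sqrt (1 + a\<^sup>2) * ellK (a\<^sup>2) / ellK 0) (at_right 0)"
proof -
  define bm where "bm = sqrt (2 / a - 2 * a)"
  have pos: "0 < 2 / a - 2 * a"
  proof -
    have "a * a < 1 * 1" using a by (intro mult_strict_mono) auto
    then have "2 * a < 2 / a" using a by (simp add: less_divide_eq)
    then show ?thesis by simp
  qed
  have bm: "0 < bm" using pos by (simp add: bm_def)
  have ev: "eventually (\<lambda>b. Txi a b / Teta a b = II (bet a b) (- 2 * a) / II (qq a b + pp a b) (qq a b - pp a b)) (at_right 0)"
    using eventually_at_right_real[OF bm]
  proof eventually_elim
    case (elim b)
    then have "0 < b" "b < bm" by auto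
    then have "b\<^sup>2 < 2 / a - 2 * a" using sq_lt_of_lt_sqrt[of b "2 / a - 2 * a"] pos by (simp add: bm_def)
    then show ?case using ratio_eq[OF a(1) \<open>0 < b\<close>] by simp
  qed
  have tb: "((\<lambda>b. bet a b) \<longlongrightarrow> bet a 0) (at_right 0)"
    unfolding bet_def by (intro tendsto_intros)
  have tp: "((\<lambda>b. pp a b) \<longlongrightarrow> pp a 0) (at_right 0)"
    unfolding pp_def by (intro tendsto_intros tb) simp_all
  have tq: "((\<lambda>b. qq a b) \<longlongrightarrow> qq a 0) (at_right 0)"
    unfolding qq_def by (intro tendsto_intros tb) simp_all
  have v: "bet a 0 = 2 / a" "qq a 0 + pp a 0 = 2 / a + 2 * a" "qq a 0 - pp a 0 = 0"
    using vals0[OF a(1)] by auto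
  have pos2: "0 < 2 / a + 2 * a" using a by (intro add_pos_pos) auto
  have t1: "((\<lambda>b. II (bet a b) (- 2 * a)) \<longlongrightarrow> II (bet a 0) (- 2 * a)) (at_right 0)"
    by (rule II_tendsto[OF tb tendsto_const]) (use v pos a in auto)
  have t2: "((\<lambda>b. II (qq a b + pp a b) (qq a b - pp a b)) \<longlongrightarrow> II (qq a 0 + pp a 0) (qq a 0 - pp a 0)) (at_right 0)"
    by (rule II_tendsto[OF tendsto_add[OF tq tp] tendsto_diff[OF tq tp]]) (use v pos2 in auto)
  have nz: "II (qq a 0 + pp a 0) (qq a 0 - pp a 0) \<noteq> 0"
    using II_pos[of "qq a 0 + pp a 0" "qq a 0 - pp a 0"] v pos2 by auto
  have "((\<lambda>b. II (bet a b) (- 2 * a) / II (qq a b + pp a b) (qq a b - pp a b))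
      \<longlongrightarrow> II (bet a 0) (- 2 * a) / II (qq a 0 + pp a 0) (qq a 0 - pp a 0)) (at_right 0)"
    by (rule tendsto_divide[OF t1 t2 nz])
  then have "((\<lambda>b. Txi a b / Teta a b) \<longlongrightarrow> II (bet a 0) (- 2 * a) / II (qq a 0 + pp a 0) (qq a 0 - pp a 0)) (at_right 0)"
    using tendsto_cong[OF ev] by blast
  then show ?thesis unfolding final_value[OF a(1)] .
qed

lemma II_log:
  assumes a: "0 < a" and d: "0 < d" "d < 1"
  shows "- ln d / sqrt (2 * (1 + 4 * a)) \<le> II (2 * a + d) (- 2 * a)"
proof -
  define c where "c = 1 / sqrt (2 * (1 + 4 * a))"
  have c: "0 < c" using a by (simp add: c_def)
  have fi: "((\<lambda>s. c / (1 - s)) has_integral (- c * ln (1 - (1 - d)) - (- c * ln (1 - 0)))) {0..1 - d}"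
  proof (rule fundamental_theorem_of_calculus)
    show "0 \<le> 1 - d" using d by simp
    fix x :: real assume x: "x \<in> {0..1 - d}"
    then have x1: "x < 1" using d by simp
    have "((\<lambda>s. - c * ln (1 - s)) has_real_derivative c / (1 - x)) (at x)"
      using x1 by (auto intro!: derivative_eq_intros simp: field_simps)
    then show "((\<lambda>s. - c * ln (1 - s)) has_vector_derivative c / (1 - x)) (at x within {0..1 - d})"
      by (simp add: has_real_derivative_iff_has_vector_derivative has_vector_derivative_at_within)
  qed
  then have fi: "((\<lambda>s. c / (1 - s)) has_integral (- c * ln d)) {0..1 - d}" by simp
  have int: "Qf (2 * a + d) (- 2 * a) integrable_on {0..1}" using a d by (intro Qf_integrable) auto
  have int': "Qf (2 * a + d) (- 2 * a) integrable_on {0..1 - d}"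
    by (rule integrable_on_subinterval[OF int]) (use d in auto)
  have "- c * ln d \<le> integral {0..1 - d} (Qf (2 * a + d) (- 2 * a))"
  proof (rule has_integral_le[OF fi integrable_integral[OF int']])
    fix s :: real assume s: "s \<in> {0..1 - d}"
    define t where "t = 1 - s"
    have t: "d \<le> t" "t \<le> 1" "0 < t" using s d by (auto simp: t_def)
    have e1: "1 - s\<^sup>2 = t * (2 - t)" by (simp add: t_def power2_eq_square algebra_simps)
    have e2: "2 * a + d + - 2 * a * s\<^sup>2 = d + 2 * a * (t * (2 - t))"
      by (simp add: t_def power2_eq_square algebra_simps)
    have u: "0 < t * (2 - t)" "t * (2 - t) \<le> 2 * t" using t by auto
    have v: "0 < d + 2 * a * (t * (2 - t))" "d + 2 * a * (t * (2 - t)) \<le> t * (1 + 4 * a)"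
    proof -
      show "0 < d + 2 * a * (t * (2 - t))" using u a d by (intro add_pos_nonneg) auto
      have "2 * a * (t * (2 - t)) \<le> 2 * a * (2 * t)" using u a by (intro mult_left_mono) auto
      then show "d + 2 * a * (t * (2 - t)) \<le> t * (1 + 4 * a)" using t by (simp add: algebra_simps)
    qed
    define P where "P = (1 - s\<^sup>2) * (2 * a + d + - 2 * a * s\<^sup>2)"
    have P: "0 < P" "P \<le> (2 * t) * (t * (1 + 4 * a))"
      unfolding P_def e1 e2 using u v by (auto intro!: mult_mono)
    have "c / (1 - s) = 1 / sqrt ((2 * (1 + 4 * a)) * t\<^sup>2)"
      using t a by (simp add: c_def t_def real_sqrt_mult)
    also have "\<dots> \<le> 1 / sqrt P"
      using P by (intro divide_left_mono real_sqrt_le_mono mult_pos_pos) (auto simp: power2_eq_square algebra_simps)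
    also have "\<dots> = Qf (2 * a + d) (- 2 * a) s" by (simp add: Qf_def P_def)
    finally show "c / (1 - s) \<le> Qf (2 * a + d) (- 2 * a) s" .
  qed
  also have "\<dots> \<le> II (2 * a + d) (- 2 * a)"
    unfolding II_def
  proof (rule integral_subset_le[OF _ int' int])
    show "{0..1 - d} \<subseteq> {0..1}" using d by auto
    show "\<forall>x\<in>{0..1}. 0 \<le> Qf (2 * a + d) (- 2 * a) x"
    proof
      fix x :: real assume "x \<in> {0..1}"
      then have x2: "x\<^sup>2 \<le> 1" by (auto simp: abs_square_le_1)
      then have "2 * a * x\<^sup>2 \<le> 2 * a" using a by (simp add: mult_left_le)
      then have "0 \<le> (1 - x\<^sup>2) * (2 * a + d + - 2 * a * x\<^sup>2)" using x2 d by (intro mult_nonneg_nonneg) auto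
      then show "0 \<le> Qf (2 * a + d) (- 2 * a) x" by (simp add: Qf_def)
    qed
  qed
  finally show ?thesis by (simp add: c_def)
qed

lemma pos_gap:
  fixes a :: real
  assumes a: "0 < a" "a < 1"
  shows "0 < 2 / a - 2 * a"
proof -
  have "a * a < 1 * 1" using a by (intro mult_strict_mono) auto
  then have "2 * a < 2 / a" using a by (simp add: less_divide_eq)
  then show ?thesis by simp
qed

lemma Y_bound:
  assumes a: "0 < a" "a < 1" and b: "0 < b" "b\<^sup>2 < 2 / a - 2 * a"
  shows "II (qq a b + pp a b) (qq a b - pp a b) \<le> sqrt (1 / (2 * a)) * ellK 0"
proof -
  have pq: "\<bar>pp a b\<bar> < qq a b" by (rule qq_gt[OF a(1) b(1)])
  have p: "2 * a < pp a b" using b by (simp add: pp_def bet_def)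
  show ?thesis unfolding ellK0_eq
  proof (rule II_cmp)
    have pa: "pp a b \<le> \<bar>pp a b\<bar>" by (rule abs_ge_self)
    have h1: "2 * a \<le> qq a b + pp a b" using pq p pa by linarith
    have h2: "2 * a \<le> qq a b + pp a b + (qq a b - pp a b)" using pq p pa by linarith
    show "1 \<le> 1 / (2 * a) * (qq a b + pp a b)" using h1 a by (simp add: le_divide_eq)
    show "1 + 0 \<le> 1 / (2 * a) * (qq a b + pp a b + (qq a b - pp a b))" using h2 a by (simp only: add_0_right le_divide_eq times_divide_eq_left mult_1_left) simp
    show "0 < qq a b + pp a b" using h1 a by linarith
    show "0 < qq a b + pp a b + (qq a b - pp a b)" using h2 a by linarith
    show "0 < 1 / (2 * a)" using a by simp
  qed simp_all
qed

lemma limtop: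
  assumes a: "0 < a" "a < 1"
  shows "filterlim (\<lambda>b. Txi a b / Teta a b) at_top (at_left (sqrt (2 / a - 2 * a)))"
proof -
  define bm where "bm = sqrt (2 / a - 2 * a)"
  have pos: "0 < 2 / a - 2 * a" by (rule pos_gap[OF a])
  have bm: "0 < bm" "bm\<^sup>2 = 2 / a - 2 * a" using pos by (auto simp: bm_def)
  define d where "d b = bet a b - 2 * a" for b
  have d_eq: "d = (\<lambda>b. 2 / a - b\<^sup>2 - 2 * a)" by (simp add: d_def bet_def fun_eq_iff)
  have td0: "((\<lambda>b. 2 / a - b\<^sup>2 - 2 * a) \<longlongrightarrow> 2 / a - bm\<^sup>2 - 2 * a) (at_left bm)"
    by (intro tendsto_intros)
  have z: "2 / a - bm\<^sup>2 - 2 * a = 0" using bm(2) by linarith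
  have td: "(d \<longlongrightarrow> 0) (at_left bm)" using td0 unfolding z d_eq .
  have ev1: "eventually (\<lambda>b. 0 < b \<and> b\<^sup>2 < 2 / a - 2 * a) (at_left bm)"
    using eventually_at_left_real[OF bm(1)]
  proof eventually_elim
    case (elim b)
    then have "0 < b" "b < bm" by auto
    then show ?case using sq_lt_of_lt_sqrt[of b "2 / a - 2 * a"] pos by (simp add: bm_def)
  qed
  have ev2: "eventually (\<lambda>b. d b < 1) (at_left bm)"
    using order_tendstoD(2)[OF td] by simp
  have dpos: "eventually (\<lambda>b. 0 < d b) (at_left bm)"
    using ev1 by eventually_elim (simp add: d_def bet_def)
  have fd: "filterlim d (at_right 0) (at_left bm)"
    unfolding filterlim_at
  proof (intro conjI td)
    show "eventually (\<lambda>b. d b \<in> {0<..} \<and> d b \<noteq> 0) (at_left bm)"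
      using dpos by eventually_elim auto
  qed
  have fln: "filterlim (\<lambda>b. ln (d b)) at_bot (at_left bm)"
    by (rule filterlim_compose[OF ln_at_0 fd])
  have fmln: "filterlim (\<lambda>b. - ln (d b)) at_top (at_left bm)"
    by (subst filterlim_uminus_at_top) (simp add: fln)
  define M where "M = sqrt (1 / (2 * a)) * ellK 0"
  have M: "0 < M" using a ellK0_pos by (simp add: M_def)
  define c where "c = 1 / sqrt (2 * (1 + 4 * a))"
  have c: "0 < c" using a by (simp add: c_def)
  have lim: "filterlim (\<lambda>b. (c / M) * (- ln (d b))) at_top (at_left bm)"
    by (rule filterlim_tendsto_pos_mult_at_top[OF tendsto_const _ fmln]) (use c M in simp)
  have "eventually (\<lambda>b. (c / M) * (- ln (d b)) \<le> Txi a b / Teta a b) (at_left bm)"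
    using ev1 ev2 dpos
  proof eventually_elim
    case (elim b)
    then have b: "0 < b" "b\<^sup>2 < 2 / a - 2 * a" and dd: "0 < d b" "d b < 1" by auto
    define X where "X = II (bet a b) (- 2 * a)"
    define Y where "Y = II (qq a b + pp a b) (qq a b - pp a b)"
    have pq: "\<bar>pp a b\<bar> < qq a b" by (rule qq_gt[OF a(1) b(1)])
    have Y: "0 < Y" "Y \<le> M" unfolding Y_def M_def
      using II_pos[of "qq a b + pp a b" "qq a b - pp a b"] pq Y_bound[OF a b] by auto
    have betd: "bet a b = 2 * a + d b" by (simp add: d_def)
    have X: "- ln (d b) / sqrt (2 * (1 + 4 * a)) \<le> X"
      unfolding X_def betd by (rule II_log[OF a(1) dd])
    have X0: "0 \<le> - ln (d b)" using dd by simp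
    have "(c / M) * (- ln (d b)) = (- ln (d b) / sqrt (2 * (1 + 4 * a))) / M"
      by (simp add: c_def)
    also have "\<dots> \<le> X / M" by (rule divide_right_mono) (use X M in auto)
    also have "\<dots> \<le> X / Y"
    proof (rule divide_left_mono)
      have "0 \<le> - ln (d b) / sqrt (2 * (1 + 4 * a))" using X0 a by (intro divide_nonneg_pos) auto
      then show "0 \<le> X" using X by linarith
    qed (use Y M in auto)
    also have "\<dots> = Txi a b / Teta a b" using ratio_eq[OF a(1) b] by (simp add: X_def Y_def)
    finally show ?case .
  qed
  then have "filterlim (\<lambda>b. Txi a b / Teta a b) at_top (at_left bm)"
    by (rule filterlim_at_top_mono[OF lim])
  then show ?thesis unfolding bm_def .
qed

theorem proposition3p2:
  fixes a :: real
  assumes "0 < a" and "a < 1"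
  shows "strict_mono_on {0<..<sqrt (2 / a - 2 * a)} (\<lambda>b. Txi a b / Teta a b)
       \<and> ((\<lambda>b. Txi a b / Teta a b) \<longlongrightarrow> sqrt (1 + a\<^sup>2) * ellK (a\<^sup>2) / ellK 0) (at_right 0)
       \<and> filterlim (\<lambda>b. Txi a b / Teta a b) at_top (at_left (sqrt (2 / a - 2 * a)))"
proof (intro conjI)
  have a: "0 < a" "a < 1" using assms by auto
  have pos: "0 < 2 / a - 2 * a" by (rule pos_gap[OF a])
  show "strict_mono_on {0<..<sqrt (2 / a - 2 * a)} (\<lambda>b. Txi a b / Teta a b)"
  proof (rule strict_mono_onI)
    fix r s assume r: "r \<in> {0<..<sqrt (2 / a - 2 * a)}" and s: "s \<in> {0<..<sqrt (2 / a - 2 * a)}" and rs: "r < s"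
    have r2: "r\<^sup>2 < 2 / a - 2 * a" using r sq_lt_of_lt_sqrt[of r "2 / a - 2 * a"] pos by auto
    have s2: "s\<^sup>2 < 2 / a - 2 * a" using s sq_lt_of_lt_sqrt[of s "2 / a - 2 * a"] pos by auto
    have "0 < r" "0 < s" using r s by auto
    show "Txi a r / Teta a r < Txi a s / Teta a s"
      unfolding ratio_eq[OF a(1) \<open>0 < r\<close> r2] ratio_eq[OF a(1) \<open>0 < s\<close> s2]
      by (rule mono_step[OF a \<open>0 < r\<close> rs s2])
  qed
  show "((\<lambda>b. Txi a b / Teta a b) \<longlongrightarrow> sqrt (1 + a\<^sup>2) * ellK (a\<^sup>2) / ellK 0) (at_right 0)"
    by (rule lim0[OF a])
  show "filterlim (\<lambda>b. Txi a b / Teta a b) at_top (at_left (sqrt (2 / a - 2 * a)))"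
    by (rule limtop[OF a])
qed

end
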